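(* Let $N\ge4$, $M\ge1$, $\mathcal I_N=\{(i,j):i,j\in\{1,\dots,N\},i\ne j\}$, and for each $(i,j)\in\mathcal I_N$ let $Y_{ij}\in\{0,\dots,M\}$ and $X_{ij}\in\mathbb R^k$. Suppose that, conditional on $\mathbf X=(X_{ij})$ and fixed effects $\mathbf F=((\alpha_i,\gamma_i))_{i=1}^N$, the $Y_{ij}$ are independent across dyads with \[ P(Y_{ij}=m\mid X_{ij},F_i,F_j)=\begin{cases}1-\Lambda(X_{ij}'\beta_0+\alpha_i+\gamma_j-\lambda_{10}), & m=0,\\ \Lambda(X_{ij}'\beta_0+\alpha_i+\gamma_j-\lambda_{m0})-\Lambda(X_{ij}'\beta_0+\alpha_i+\gamma_j-\lambda_{m+1,0}), & 1\le m\le M-1,\\ \Lambda(X_{ij}'\beta_0+\alpha_i+\gamma_j-\lambda_{M0}), & m=M,\end{cases} \] where $\Lambda(z)=e^z/(1+e^z)$, $\beta_0\in\mathbb R^k$, and $\lambda_{10}\le\lambda_{20}\le\dots\le\lambda_{M0}$ are common thresholds. Let $D_{ij}(m)=\mathbf 1\{Y_{ij}\ge m\}$. For a tetrad $\sigma=(i_1,i_2,j_1,j_2)$ of four distinct nodes and a cutoff vector $\mathbf m=(m_{11},m_{12},m_{21},m_{22})\in\{1,\dots,M\}^4$ define \[ Z_\sigma(\mathbf m)=\tfrac12\Big((D_{i_1j_1}(m_{11})-D_{i_1j_2}(m_{12}))-(D_{i_2j_1}(m_{21})-D_{i_2j_2}(m_{22}))\Big), \] $X_\sigma=(X_{i_1j_1},X_{i_1j_2},X_{i_2j_1},X_{i_2j_2})$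 and $r_\sigma=(X_{i_1j_1}-X_{i_1j_2})-(X_{i_2j_1}-X_{i_2j_2})$. Then \[ P\big(Z_\sigma(\mathbf m)=1\mid Z_\sigma(\mathbf m)\in\{-1,+1\},X_\sigma\big)=\Lambda\big(r_\sigma'\beta_0-\lambda_0(\mathbf m)\big), \] where $\lambda_0(\mathbf m)=(\lambda_{m_{11}0}-\lambda_{m_{12}0})-(\lambda_{m_{21}0}-\lambda_{m_{22}0})$.
   Context: $\alpha_i$ is a sender fixed effect and $\gamma_j$ a receiver fixed effect, both constant across outcome categories. *)

theory Defs
  imports "HOL-Analysis.Analysis" "HOL-Probability.Probability"
begin

definition logistic :: "real \<Rightarrow> real" where
  "logistic z = exp z / (1 + exp z)"

definition dyads :: "nat \<Rightarrow> (nat \<times> nat) set" where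
  "dyads N = {(i, j). i \<in> {1..N} \<and> j \<in> {1..N} \<and> i \<noteq> j}"

definition Dind :: "(nat \<times> nat \<Rightarrow> nat) \<Rightarrow> nat \<Rightarrow> nat \<Rightarrow> nat \<Rightarrow> real" where
  "Dind y i j m = (if y (i, j) \<ge> m then 1 else 0)"

definition Ztet :: "(nat \<times> nat \<Rightarrow> nat) \<Rightarrow> nat \<Rightarrow> nat \<Rightarrow> nat \<Rightarrow> nat
    \<Rightarrow> nat \<Rightarrow> nat \<Rightarrow> nat \<Rightarrow> nat \<Rightarrow> real" where
  "Ztet y i1 i2 j1 j2 m11 m12 m21 m22 =
     ((Dind y i1 j1 m11 - Dind y i1 j2 m12) - (Dind y i2 j1 m21 - Dind y i2 j2 m22)) / 2"

end

theory Submission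
  imports Defs
begin

lemma four_prob:
  fixes p :: "'a \<Rightarrow> 'b pmf"
  assumes fin: "finite A" and mem: "a \<in> A" "b \<in> A" "c \<in> A" "d \<in> A"
    and dist: "distinct [a, b, c, d]"
  shows "measure (measure_pmf (Pi_pmf A dflt p)) {y. y a \<in> S1 \<and> y b \<in> S2 \<and> y c \<in> S3 \<and> y d \<in> S4}
     = measure (p a) S1 * measure (p b) S2 * measure (p c) S3 * measure (p d) S4"
proof -
  define B where "B x = (if x = a then S1 else if x = b then S2 else if x = c then S3
      else if x = d then S4 else UNIV)" for x
  have eq: "{y. y a \<in> S1 \<and> y b \<in> S2 \<and> y c \<in> S3 \<and> y d \<in> S4} = Pi A B"
  proof (intro equalityI subsetI)
    fix y assume "y \<in> {y. y a \<in> S1 \<and> y b \<in> S2 \<and> y c \<in> S3 \<and> y d \<in> S4}"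
    then show "y \<in> Pi A B" by (auto simp: B_def Pi_def)
  next
    fix y assume y: "y \<in> Pi A B"
    have "y a \<in> B a" "y b \<in> B b" "y c \<in> B c" "y d \<in> B d" using y mem by auto
    moreover have "a \<noteq> b" "a \<noteq> c" "a \<noteq> d" "b \<noteq> c" "b \<noteq> d" "c \<noteq> d" using dist by auto
    ultimately show "y \<in> {y. y a \<in> S1 \<and> y b \<in> S2 \<and> y c \<in> S3 \<and> y d \<in> S4}"
      by (simp add: B_def)
  qed
  have "measure (measure_pmf (Pi_pmf A dflt p)) (Pi A B) = (\<Prod>x\<in>A. measure (p x) (B x))"
    using fin by (rule measure_Pi_pmf_Pi)
  also have "\<dots> = (\<Prod>x\<in>{a,b,c,d}. measure (p x) (B x))"
    using fin mem by (intro prod.mono_neutral_right) (auto simp: B_def)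
  also have "\<dots> = measure (p a) S1 * measure (p b) S2 * measure (p c) S3 * measure (p d) S4"
  proof -
    have ne: "a \<noteq> b" "a \<noteq> c" "a \<noteq> d" "b \<noteq> c" "b \<noteq> d" "c \<noteq> d" using dist by auto
    have Bs: "B a = S1" "B b = S2" "B c = S3" "B d = S4" using ne by (auto simp: B_def)
    show ?thesis using ne by (simp add: Bs mult.assoc)
  qed
  finally show ?thesis using eq by simp
qed

lemma tail_sum:
  fixes q :: "nat pmf" and f :: "nat \<Rightarrow> real"
  assumes "\<And>m. 1 \<le> m \<Longrightarrow> m \<le> M - 1 \<Longrightarrow> pmf q m = f m - f (m + 1)"
    and "pmf q M = f M" and "M \<ge> 1"
  shows "1 \<le> m \<Longrightarrow> m \<le> M \<Longrightarrow> sum (pmf q) {m..M} = f m"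
proof (induction "M - m" arbitrary: m)
  case 0
  then have "m = M" by simp
  then show ?case using assms by simp
next
  case (Suc k)
  then have "{m..M} = insert m {m+1..M}" "m \<notin> {m+1..M}" by auto
  then have "sum (pmf q) {m..M} = pmf q m + sum (pmf q) {m+1..M}" by simp
  also have "sum (pmf q) {m+1..M} = f (m+1)" using Suc by auto
  also have "pmf q m = f m - f (m + 1)" using Suc assms(1) by auto
  finally show ?case by simp
qed

lemma tail_prob:
  fixes q :: "nat pmf" and f :: "nat \<Rightarrow> real"
  assumes "\<And>m. 1 \<le> m \<Longrightarrow> m \<le> M - 1 \<Longrightarrow> pmf q m = f m - f (m + 1)"
    and "pmf q M = f M" and "M \<ge> 1" and "set_pmf q \<subseteq> {0..M}"
    and "1 \<le> m" "m \<le> M"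
  shows "measure q {m..} = f m" "measure q {..<m} = 1 - f m"
proof -
  have "measure q {m..} = measure q ({m..} \<inter> set_pmf q)" by (simp add: measure_Int_set_pmf)
  also have "{m..} \<inter> set_pmf q = {m..M} \<inter> set_pmf q" using assms(4) by auto
  also have "measure q \<dots> = measure q {m..M}" by (simp add: measure_Int_set_pmf)
  also have "\<dots> = sum (pmf q) {m..M}" by (simp add: measure_measure_pmf_finite)
  also have "\<dots> = f m" using tail_sum[OF assms(1-3)] assms(5,6) by blast
  finally show 1: "measure q {m..} = f m" .
  have "{..<m} = UNIV - {m..}" by auto
  then show "measure q {..<m} = 1 - f m" using 1 measure_pmf.prob_compl[of "{m..}" q] by simp
qed

lemma alg4:
  fixes ea eb ec ed :: real
  assumes pos: "ea > 0" "eb > 0" "ec > 0" "ed > 0"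
  shows "ea / (1 + ea) * (1 - eb / (1 + eb)) * (1 - ec / (1 + ec)) * (ed / (1 + ed)) /
     (ea / (1 + ea) * (1 - eb / (1 + eb)) * (1 - ec / (1 + ec)) * (ed / (1 + ed)) +
      (1 - ea / (1 + ea)) * (eb / (1 + eb)) * (ec / (1 + ec)) * (1 - ed / (1 + ed)))
   = ea * ed / (eb * ec) / (1 + ea * ed / (eb * ec))"
proof -
  have c: "1 - e / (1 + e) = 1 / (1 + e)" if "e > 0" for e :: real
    using that by (simp add: field_simps)
  define D where "D = (1 + ea) * (1 + eb) * (1 + ec) * (1 + ed)"
  have D: "D > 0" using pos by (simp add: D_def)
  have 1: "ea / (1 + ea) * (1 / (1 + eb)) * (1 / (1 + ec)) * (ed / (1 + ed)) = ea * ed / D"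
    by (simp add: D_def field_simps)
  have 2: "(1 / (1 + ea)) * (eb / (1 + eb)) * (ec / (1 + ec)) * (1 / (1 + ed)) = eb * ec / D"
    by (simp add: D_def field_simps)
  have 3: "ea * ed / D / (ea * ed / D + eb * ec / D) = ea * ed / (ea * ed + eb * ec)"
    using D pos by (simp add: field_simps add_divide_distrib[symmetric])
  have 4: "ea * ed / (eb * ec) / (1 + ea * ed / (eb * ec)) = ea * ed / (ea * ed + eb * ec)"
    using pos by (simp add: field_simps)
  show ?thesis using pos by (simp only: c 1 2 3 4)
qed

theorem theorem3:
  fixes N M :: nat
    and X :: "nat \<times> nat \<Rightarrow> 'a::euclidean_space"
    and \<beta>0 :: 'a
    and \<alpha> \<gamma> :: "nat \<Rightarrow> real"
    and lam :: "nat \<Rightarrow> real"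
    and p :: "nat \<times> nat \<Rightarrow> nat pmf"
    and i1 i2 j1 j2 m11 m12 m21 m22 :: nat
  assumes "N \<ge> 4" and "M \<ge> 1"
    and lam_mono: "\<And>m m'. 1 \<le> m \<Longrightarrow> m \<le> m' \<Longrightarrow> m' \<le> M \<Longrightarrow> lam m \<le> lam m'"
    and supp: "\<And>i j. (i, j) \<in> dyads N \<Longrightarrow> set_pmf (p (i, j)) \<subseteq> {0..M}"
    and p0: "\<And>i j. (i, j) \<in> dyads N \<Longrightarrow>
       pmf (p (i, j)) 0 = 1 - logistic (X (i, j) \<bullet> \<beta>0 + \<alpha> i + \<gamma> j - lam 1)"
    and pm: "\<And>i j m. (i, j) \<in> dyads N \<Longrightarrow> 1 \<le> m \<Longrightarrow> m \<le> M - 1 \<Longrightarrow>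
       pmf (p (i, j)) m = logistic (X (i, j) \<bullet> \<beta>0 + \<alpha> i + \<gamma> j - lam m)
                        - logistic (X (i, j) \<bullet> \<beta>0 + \<alpha> i + \<gamma> j - lam (m + 1))"
    and pM: "\<And>i j. (i, j) \<in> dyads N \<Longrightarrow>
       pmf (p (i, j)) M = logistic (X (i, j) \<bullet> \<beta>0 + \<alpha> i + \<gamma> j - lam M)"
    and nodes: "i1 \<in> {1..N}" "i2 \<in> {1..N}" "j1 \<in> {1..N}" "j2 \<in> {1..N}"
    and distinct: "distinct [i1, i2, j1, j2]"
    and cutoffs: "m11 \<in> {1..M}" "m12 \<in> {1..M}" "m21 \<in> {1..M}" "m22 \<in> {1..M}"
  shows "cond_prob (measure_pmf (Pi_pmf (dyads N) 0 p))
           (\<lambda>y. Ztet y i1 i2 j1 j2 m11 m12 m21 m22 = 1)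
           (\<lambda>y. Ztet y i1 i2 j1 j2 m11 m12 m21 m22 \<in> {-1, 1})
         = logistic (((X (i1, j1) - X (i1, j2)) - (X (i2, j1) - X (i2, j2))) \<bullet> \<beta>0
                     - ((lam m11 - lam m12) - (lam m21 - lam m22)))"
proof -
  define a where "a = (i1, j1)"
  define b where "b = (i1, j2)"
  define c where "c = (i2, j1)"
  define d where "d = (i2, j2)"
  have ne: "i1 \<noteq> i2" "i1 \<noteq> j1" "i1 \<noteq> j2" "i2 \<noteq> j1" "i2 \<noteq> j2" "j1 \<noteq> j2"
    using distinct by auto
  have mem: "a \<in> dyads N" "b \<in> dyads N" "c \<in> dyads N" "d \<in> dyads N"
    using nodes ne by (auto simp: a_def b_def c_def d_def dyads_def)
  have dst: "distinct [a, b, c, d]" using ne by (auto simp: a_def b_def c_def d_def)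
  have fin: "finite (dyads N)"
    by (rule finite_subset[of _ "{1..N} \<times> {1..N}"]) (auto simp: dyads_def)
  define s where "s x = X x \<bullet> \<beta>0 + \<alpha> (fst x) + \<gamma> (snd x)" for x
  have tl: "measure (p x) {m..} = logistic (s x - lam m) \<and>
            measure (p x) {..<m} = 1 - logistic (s x - lam m)"
    if x: "x \<in> dyads N" and m: "1 \<le> m" "m \<le> M" for x m
  proof -
    obtain i j where ij: "x = (i, j)" by (cases x)
    have "measure (p x) {m..} = logistic (s x - lam m)"
      "measure (p x) {..<m} = 1 - logistic (s x - lam m)"
      using tail_prob[of M "p x" "\<lambda>m. logistic (s x - lam m)", OF _ _ \<open>M \<ge> 1\<close> _ m]
        pm[of i j] pM[of i j] supp[of i j] x unfolding ij s_def by auto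
    then show ?thesis by simp
  qed
  define Z where "Z y = Ztet y i1 i2 j1 j2 m11 m12 m21 m22" for y
  define E1 where "E1 = {y. y a \<in> {m11..} \<and> y b \<in> {..<m12} \<and> y c \<in> {..<m21} \<and> y d \<in> {m22..}}"
  define E2 where "E2 = {y. y a \<in> {..<m11} \<and> y b \<in> {m12..} \<and> y c \<in> {m21..} \<and> y d \<in> {..<m22}}"
  have ev1: "{y. Z y = 1 \<and> Z y \<in> {-1, 1}} = E1"
    by (auto simp: Z_def E1_def Ztet_def Dind_def a_def b_def c_def d_def split: if_splits)
  have ev2: "{y. Z y \<in> {-1, 1}} = E1 \<union> E2"
    by (auto simp: Z_def E1_def E2_def Ztet_def Dind_def a_def b_def c_def d_def split: if_splits)
  have disj: "E1 \<inter> E2 = {}" by (auto simp: E1_def E2_def)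
  define P where "P = measure_pmf (Pi_pmf (dyads N) 0 p)"
  define la where "la = logistic (s a - lam m11)"
  define lb where "lb = logistic (s b - lam m12)"
  define lc where "lc = logistic (s c - lam m21)"
  define ld where "ld = logistic (s d - lam m22)"
  have PE1: "measure P E1 = la * (1 - lb) * (1 - lc) * ld"
    unfolding P_def E1_def
    by (subst four_prob[OF fin mem dst]) (use tl mem cutoffs in \<open>simp add: la_def lb_def lc_def ld_def\<close>)
  have PE2: "measure P E2 = (1 - la) * lb * lc * (1 - ld)"
    unfolding P_def E2_def
    by (subst four_prob[OF fin mem dst]) (use tl mem cutoffs in \<open>simp add: la_def lb_def lc_def ld_def\<close>)
  have lhs: "cond_prob P (\<lambda>y. Z y = 1) (\<lambda>y. Z y \<in> {-1, 1}) = measure P E1 / (measure P E1 + measure P E2)"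
  proof -
    have "cond_prob P (\<lambda>y. Z y = 1) (\<lambda>y. Z y \<in> {-1, 1}) =
       measure P {y. Z y = 1 \<and> Z y \<in> {-1, 1}} / measure P {y. Z y \<in> {-1, 1}}"
      by (simp add: cond_prob_def P_def)
    also have "\<dots> = measure P E1 / measure P (E1 \<union> E2)" by (simp only: ev1 ev2)
    also have "measure P (E1 \<union> E2) = measure P E1 + measure P E2"
      using disj unfolding P_def by (simp add: measure_pmf.finite_measure_Union)
    finally show ?thesis .
  qed
  define ea where "ea = exp (s a - lam m11)"
  define eb where "eb = exp (s b - lam m12)"
  define ec where "ec = exp (s c - lam m21)"
  define ed where "ed = exp (s d - lam m22)"
  have pos: "ea > 0" "eb > 0" "ec > 0" "ed > 0" by (auto simp: ea_def eb_def ec_def ed_def)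
  have rhs_arg: "((X (i1, j1) - X (i1, j2)) - (X (i2, j1) - X (i2, j2))) \<bullet> \<beta>0
                     - ((lam m11 - lam m12) - (lam m21 - lam m22))
      = (s a - lam m11) - (s b - lam m12) - (s c - lam m21) + (s d - lam m22)"
    by (simp add: s_def a_def b_def c_def d_def inner_diff_left)
  have rhs: "exp ((s a - lam m11) - (s b - lam m12) - (s c - lam m21) + (s d - lam m22))
       = ea * ed / (eb * ec)"
    by (simp add: ea_def eb_def ec_def ed_def exp_add exp_diff ac_simps)
  have "cond_prob P (\<lambda>y. Z y = 1) (\<lambda>y. Z y \<in> {-1, 1}) =
        logistic ((s a - lam m11) - (s b - lam m12) - (s c - lam m21) + (s d - lam m22))"
    unfolding lhs PE1 PE2 logistic_def rhs la_def lb_def lc_def ld_def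
    unfolding logistic_def ea_def[symmetric] eb_def[symmetric] ec_def[symmetric] ed_def[symmetric]
    using alg4[OF pos] by simp
  then show ?thesis unfolding rhs_arg[symmetric] P_def Z_def .
qed

end
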